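(* Let $\alpha>0$ and let $n\ge2$ be an integer. Then, as functions on $\mathbb{R}\setminus\{0\}$, $$n^{\alpha-1}\,f_{\frac{\alpha}{n}}*f_{\frac{\alpha+1}{n}}*f_{\frac{\alpha+2}{n}}*\cdots*f_{\frac{\alpha+n-1}{n}}=f_{\frac1n}*f_{\frac2n}*\cdots*f_{\frac{n-1}{n}}*f_\alpha .$$
   Context: For $\beta>0$, $f_\beta:\mathbb{R}\to\mathbb{R}$ is defined by $f_\beta(t)=0$ for $t<0$ and $f_\beta(t)=t^{\beta-1}$ for $t>0$. For functions vanishing on $(-\infty,0)$, convolution is $(f*g)(t)=\int_0^t f(\tau)g(t-\tau)\,d\tau$ for $t>0$ and $0$ for $t<0$; convolution is associative and commutative here. *)

theory Defs
  imports "HOL-Analysis.Analysis"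
begin

text \<open>The kernel f_beta: 0 for t < 0, t^(beta-1) for t > 0 (value at 0 irrelevant, set to 0).\<close>
definition fpow :: "real \<Rightarrow> real \<Rightarrow> real" where
  "fpow \<beta> t = (if t > 0 then t powr (\<beta> - 1) else 0)"

text \<open>Convolution of functions vanishing on the negative axis (Lebesgue integral).\<close>
definition conv :: "(real \<Rightarrow> real) \<Rightarrow> (real \<Rightarrow> real) \<Rightarrow> real \<Rightarrow> real" where
  "conv f g t = (if t > 0 then (LINT \<tau>:{0..t}|lborel. f \<tau> * g (t - \<tau>)) else 0)"

fun conv_list :: "(real \<Rightarrow> real) list \<Rightarrow> real \<Rightarrow> real" where
  "conv_list [] = (\<lambda>t. 0)"
| "conv_list [f] = f"
| "conv_list (f # fs) = conv f (conv_list fs)"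

end

theory Submission
  imports Defs
begin

lemma fpow_meas[measurable]: "fpow a \<in> borel_measurable borel"
  unfolding fpow_def by measurable

lemma beta_scaled:
  fixes a b t :: real
  assumes a: "a > 0" and b: "b > 0" and t: "t > 0"
  shows "((\<lambda>x. x powr (a-1) * (t - x) powr (b-1)) has_integral (t powr (a+b-1) * Beta a b)) {0..t}"
proof -
  have h: "((\<lambda>u. u powr (a - 1) * (1 - u) powr (b - 1)) has_integral Beta a b) (cbox 0 1)"
    using has_integral_Beta_real[OF a b] by simp
  from has_integral_affinity[OF h, of "1/t" 0] t
  have h2: "((\<lambda>x. (x/t) powr (a - 1) * (1 - x/t) powr (b - 1)) has_integral t * Beta a b) ((\<lambda>x. t * x) ` {0..1})"
    by simp
  have img: "(\<lambda>x. t * x) ` {0..1} = {0..t}"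
    using t by (auto simp: image_iff intro!: bexI[where x="_/t"])
  have eq: "(x/t) powr (a - 1) * (1 - x/t) powr (b - 1) = t powr (2 - a - b) * (x powr (a-1) * (t - x) powr (b-1))"
    if "x \<in> {0..t}" for x
  proof -
    have "1 - x/t = (t - x)/t" using t by (simp add: field_simps)
    hence "(x/t) powr (a - 1) * (1 - x/t) powr (b - 1) = x powr (a-1) / t powr (a-1) * ((t-x) powr (b-1) / t powr (b-1))"
      using that t by (simp add: powr_divide)
    also have "\<dots> = (x powr (a-1) * (t - x) powr (b-1)) * (1 / (t powr (a-1) * t powr (b-1)))" by simp
    also have "1 / (t powr (a-1) * t powr (b-1)) = t powr (2 - a - b)"
      using t by (simp add: powr_add[symmetric] powr_minus_divide[symmetric] diff_diff_eq)
    finally show ?thesis by simp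
  qed
  have h3: "((\<lambda>x. t powr (2 - a - b) * (x powr (a-1) * (t - x) powr (b-1))) has_integral t * Beta a b) {0..t}"
    using has_integral_spike_finite_eq[of "{}"] h2 img eq
    by (metis (no_types, lifting) has_integral_cong)
  from has_integral_mult_right[OF h3, of "t powr (a+b-1)"]
  have "((\<lambda>x. t powr (a+b-1) * t powr (2 - a - b) * (x powr (a-1) * (t - x) powr (b-1))) has_integral t powr (a+b-1) * (t * Beta a b)) {0..t}"
    by (simp add: mult.assoc)
  moreover have "t powr (a+b-1) * t powr (2 - a - b) = t" using t by (simp add: powr_add[symmetric])
  ultimately have "((\<lambda>x. t * (x powr (a-1) * (t - x) powr (b-1))) has_integral t * (t powr (a+b-1) * Beta a b)) {0..t}"
    by (simp add: mult_ac)
  from has_integral_mult_right[OF this, of "1/t"] t show ?thesis by simp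
qed

lemma conv_fpow:
  fixes a b t :: real
  assumes a: "a > 0" and b: "b > 0"
  shows "conv (fpow a) (fpow b) t = Beta a b * fpow (a+b) t"
proof (cases "t > 0")
  case False thus ?thesis by (simp add: conv_def fpow_def)
next
  case t: True
  define g where "g = (\<lambda>x::real. x powr (a-1) * (t - x) powr (b-1))"
  have hi: "(g has_integral (t powr (a+b-1) * Beta a b)) {0..t}"
    unfolding g_def by (rule beta_scaled[OF a b t])
  have ai: "g absolutely_integrable_on {0..t}"
    by (rule nonnegative_absolutely_integrable_1) (use hi in \<open>auto simp: g_def\<close>)
  have "(g has_integral set_lebesgue_integral lebesgue {0..t} g) {0..t}"
    by (rule has_integral_set_lebesgue[OF ai])
  hence L: "set_lebesgue_integral lebesgue {0..t} g = t powr (a+b-1) * Beta a b"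
    using hi has_integral_unique by blast
  have meas: "(\<lambda>x. indicator {0..t} x *\<^sub>R g x) \<in> borel_measurable lborel"
    unfolding g_def by measurable
  have "set_lebesgue_integral lborel {0..t} g = set_lebesgue_integral lebesgue {0..t} g"
    unfolding set_lebesgue_integral_def using integral_completion[OF meas] by simp
  moreover have "set_lebesgue_integral lborel {0..t} (\<lambda>x. fpow a x * fpow b (t - x))
      = set_lebesgue_integral lborel {0..t} g"
    by (rule set_lebesgue_integral_cong) (auto simp: fpow_def g_def)
  ultimately show ?thesis using t L
    by (simp add: conv_def fpow_def mult.commute)
qed

lemma conv_scale: "conv f (\<lambda>s. c * g s) t = c * conv f g t"
proof -
  have "(\<lambda>\<tau>. f \<tau> * (c * g (t - \<tau>))) = (\<lambda>\<tau>. c * (f \<tau> * g (t - \<tau>)))" by (simp add: mult_ac)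
  thus ?thesis by (simp add: conv_def set_integral_mult_right)
qed

lemma conv_list_fpow:
  "bs \<noteq> [] \<Longrightarrow> (\<forall>b\<in>set bs. b > 0) \<Longrightarrow>
   conv_list (map fpow bs) t = (prod_list (map Gamma bs) / Gamma (sum_list bs)) * fpow (sum_list bs) t"
proof (induction bs arbitrary: t)
  case Nil thus ?case by simp
next
  case (Cons b bs)
  show ?case
  proof (cases "bs = []")
    case True
    from Cons.prems have "b > 0" by simp
    hence "Gamma b \<noteq> 0" by (metis Gamma_real_pos less_irrefl)
    with True show ?thesis by simp
  next
    case False
    then obtain c cs where bs: "bs = c # cs" by (cases bs) auto
    have pos: "\<forall>x\<in>set bs. x > 0" using Cons.prems by auto
    have sp: "sum_list bs > 0" using False pos
      using sum_list_strict_mono by fastforce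
    have GS: "Gamma (sum_list bs) \<noteq> 0" using sp by (metis Gamma_real_pos less_irrefl)
    have IH: "conv_list (map fpow bs) = (\<lambda>s. (prod_list (map Gamma bs) / Gamma (sum_list bs)) * fpow (sum_list bs) s)"
      using Cons.IH[OF False pos] by auto
    have "conv_list (map fpow (b # bs)) t = conv (fpow b) (conv_list (map fpow bs)) t"
      by (simp add: bs)
    also have "\<dots> = (prod_list (map Gamma bs) / Gamma (sum_list bs)) * (Beta b (sum_list bs) * fpow (b + sum_list bs) t)"
      unfolding IH conv_scale using conv_fpow[of b "sum_list bs"] Cons.prems sp by simp
    also have "\<dots> = (prod_list (map Gamma (b # bs)) / Gamma (sum_list (b # bs))) * fpow (sum_list (b # bs)) t"
      using GS by (simp add: Beta_def field_simps)
    finally show ?thesis .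
  qed
qed

lemma pochhammer_mult:
  fixes a :: real
  assumes n: "n > 0"
  shows "pochhammer a (n*m) = real n ^ (n*m) * (\<Prod>k<n. pochhammer ((a + real k)/real n) m)"
proof (induction m)
  case 0 thus ?case by simp
next
  case (Suc m)
  have "pochhammer a (n * Suc m) = pochhammer a (n*m) * pochhammer (a + real (n*m)) n"
  proof -
    have "n * Suc m = n*m + n" by simp
    thus ?thesis by (simp only: pochhammer_product')
  qed
  also have "pochhammer (a + real (n*m)) n = (\<Prod>k<n. a + real (n*m) + real k)"
    by (simp add: pochhammer_prod atLeast0LessThan)
  also have "\<dots> = (\<Prod>k<n. real n * ((a + real k)/real n + real m))"
    using n by (intro prod.cong) (auto simp: field_simps)
  also have "\<dots> = real n ^ n * (\<Prod>k<n. (a + real k)/real n + real m)"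
    by (simp add: prod.distrib)
  finally show ?case using Suc
    by (simp add: pochhammer_Suc prod.distrib power_add mult_ac)
qed

lemma gauss_seq:
  fixes \<alpha> :: real
  assumes n: "n > 0" and a: "\<alpha> > 0" and m: "m > 0"
  defines "\<sigma> \<equiv> (\<Sum>k<n. real k / real n)"
  shows "exp (\<alpha> * ln (real n)) * (\<Prod>k<n. Gamma_series' ((\<alpha> + real k)/real n) m) / Gamma_series' \<alpha> (n*m)
       = fact (m-1) ^ n * exp (\<sigma> * ln (real m)) * real n ^ (n*m) / fact (n*m-1)"
proof -
  define P where "P = pochhammer \<alpha> (n*m)"
  have P0: "P \<noteq> 0" unfolding P_def using pochhammer_pos[of \<alpha> "n*m"] a by simp
  have sumz: "(\<Sum>k<n. (\<alpha> + real k)/real n) = \<alpha> + \<sigma>"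
    using n by (simp add: \<sigma>_def add_divide_distrib sum.distrib)
  have A: "(\<Prod>k<n. Gamma_series' ((\<alpha> + real k)/real n) m)
     = fact (m-1) ^ n * exp ((\<alpha> + \<sigma>) * ln (real m)) * real n ^ (n*m) / P"
  proof -
    have "(\<Prod>k<n. Gamma_series' ((\<alpha> + real k)/real n) m)
        = (\<Prod>k<n. fact (m-1)) * (\<Prod>k<n. exp ((\<alpha> + real k)/real n * ln (real m)))
          / (\<Prod>k<n. pochhammer ((\<alpha> + real k)/real n) m)"
      by (simp add: Gamma_series'_def prod.distrib prod_dividef)
    also have "(\<Prod>k<n. exp ((\<alpha> + real k)/real n * ln (real m))) = exp ((\<alpha> + \<sigma>) * ln (real m))"
    proof -
      have "(\<Sum>k<n. (\<alpha> + real k)/real n * ln (real m)) = (\<alpha> + \<sigma>) * ln (real m)"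
        by (simp only: sum_distrib_right[symmetric] sumz)
      thus ?thesis by (metis exp_sum finite_lessThan)
    qed
    also have "(\<Prod>k<n. pochhammer ((\<alpha> + real k)/real n) m) = P / real n ^ (n*m)"
      using pochhammer_mult[OF n, of \<alpha> m] n by (simp add: P_def field_simps)
    finally show ?thesis using n by (simp add: field_simps)
  qed
  have B: "Gamma_series' \<alpha> (n*m) = fact (n*m-1) * (exp (\<alpha> * ln (real n)) * exp (\<alpha> * ln (real m))) / P"
    using n m by (simp add: Gamma_series'_def P_def ln_mult exp_add[symmetric] distrib_left)
  show ?thesis unfolding A B using P0
    by (simp add: field_simps exp_add distrib_right)
qed

lemma gauss_lim:
  fixes \<alpha> :: real
  assumes n: "n > 0" and a: "\<alpha> > 0"
  shows "(\<lambda>m. exp (\<alpha> * ln (real n)) * (\<Prod>k<n. Gamma_series' ((\<alpha> + real k)/real n) m) / Gamma_series' \<alpha> (n*m))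
     \<longlonglongrightarrow> exp (\<alpha> * ln (real n)) * (\<Prod>k<n. Gamma ((\<alpha> + real k)/real n)) / Gamma \<alpha>"
proof -
  have sm: "strict_mono ((*) n)" using n by (simp add: strict_mono_def)
  have "(\<lambda>m. Gamma_series' \<alpha> (n*m)) \<longlonglongrightarrow> Gamma \<alpha>"
    using LIMSEQ_subseq_LIMSEQ[OF Gamma_series'_LIMSEQ sm, of \<alpha>] by (simp add: o_def)
  moreover have "Gamma \<alpha> \<noteq> 0" using a by (metis Gamma_real_pos less_irrefl)
  ultimately show ?thesis
    by (intro tendsto_intros Gamma_series'_LIMSEQ) auto
qed

lemma gauss_const:
  fixes \<alpha> :: real
  assumes n: "n > 0" and a: "\<alpha> > 0"
  shows "exp (\<alpha> * ln (real n)) * (\<Prod>k<n. Gamma ((\<alpha> + real k)/real n)) / Gamma \<alpha>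
       = real n * (\<Prod>k<n. Gamma ((1 + real k)/real n))"
proof -
  define H where "H = (\<lambda>m. fact (m-1) ^ n * exp ((\<Sum>k<n. real k / real n) * ln (real m)) * real n ^ (n*m) / fact (n*m-1) :: real)"
  have lim: "H \<longlonglongrightarrow> exp (\<beta> * ln (real n)) * (\<Prod>k<n. Gamma ((\<beta> + real k)/real n)) / Gamma \<beta>"
    if b: "\<beta> > 0" for \<beta> :: real
  proof -
    have "eventually (\<lambda>m. exp (\<beta> * ln (real n)) * (\<Prod>k<n. Gamma_series' ((\<beta> + real k)/real n) m) / Gamma_series' \<beta> (n*m) = H m) sequentially"
      using eventually_gt_at_top[of 0] by eventually_elim (use gauss_seq[OF n b] in \<open>simp add: H_def\<close>)
    from Lim_transform_eventually[OF gauss_lim[OF n b] this] show ?thesis .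
  qed
  from LIMSEQ_unique[OF lim[OF a] lim[of 1]] n show ?thesis by simp
qed

lemma prod_list_upt: "prod_list (map f [m..<n]) = prod f {m..<n}"
  by (induction n) auto

theorem proposition5:
  fixes \<alpha> :: real and n :: nat
  assumes "\<alpha> > 0" and "n \<ge> 2"
  shows "\<forall>t::real. t \<noteq> 0 \<longrightarrow>
    real n powr (\<alpha> - 1) * conv_list (map (\<lambda>k. fpow ((\<alpha> + real k) / real n)) [0..<n]) t
    = conv_list (map (\<lambda>k. fpow (real k / real n)) [1..<n] @ [fpow \<alpha>]) t"
proof (intro allI impI)
  fix t :: real
  assume "t \<noteq> 0"
  have a: "\<alpha> > 0" and n: "n > 0" and n1: "1 < n" using assms by auto
  define as where "as = map (\<lambda>k. (\<alpha> + real k) / real n) [0..<n]"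
  define bs where "bs = map (\<lambda>k. real k / real n) [1..<n] @ [\<alpha>]"
  have L: "map (\<lambda>k. fpow ((\<alpha> + real k) / real n)) [0..<n] = map fpow as"
    by (simp add: as_def)
  have R: "map (\<lambda>k. fpow (real k / real n)) [1..<n] @ [fpow \<alpha>] = map fpow bs"
    by (simp add: bs_def)
  have asne: "as \<noteq> []" using n by (simp add: as_def)
  have aspos: "\<forall>b\<in>set as. b > 0" using a n by (auto simp: as_def)
  have bsne: "bs \<noteq> []" by (simp add: bs_def)
  have bspos: "\<forall>b\<in>set bs. b > 0" using a n by (auto simp: bs_def)
  define \<sigma> where "\<sigma> = (\<Sum>k<n. real k / real n)"
  have sa: "sum_list as = \<alpha> + \<sigma>"
    using n by (simp add: as_def \<sigma>_def sum_list_map_eq_sum_count interv_sum_list_conv_sum_set_nat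
        atLeast0LessThan add_divide_distrib sum.distrib)
  have "\<sigma> = (\<Sum>k\<in>{0..<n}. real k / real n)" by (simp add: \<sigma>_def atLeast0LessThan)
  also have "\<dots> = (\<Sum>k\<in>{1..<n}. real k / real n)"
    using n by (subst sum.atLeast_Suc_lessThan) auto
  finally have sb: "sum_list bs = \<alpha> + \<sigma>"
    by (simp add: bs_def interv_sum_list_conv_sum_set_nat)
  define P where "P = (\<Prod>k<n. Gamma ((\<alpha> + real k)/real n))"
  define Q where "Q = (\<Prod>k\<in>{1..<n}. Gamma (real k / real n))"
  have pa: "prod_list (map Gamma as) = P"
    by (simp add: as_def P_def prod_list_upt atLeast0LessThan o_def)
  have pb: "prod_list (map Gamma bs) = Q * Gamma \<alpha>"
    by (simp add: bs_def Q_def prod_list_upt o_def)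
  have "(\<Prod>k<n. Gamma ((1 + real k)/real n)) = (\<Prod>k\<in>{0..<n}. (\<lambda>i. Gamma (real i / real n)) (k + 1))"
    by (simp add: atLeast0LessThan add.commute)
  also have "\<dots> = (\<Prod>k\<in>{0+1..<n+1}. Gamma (real k / real n))"
    by (rule prod.shift_bounds_nat_ivl[symmetric])
  also have "\<dots> = Q * Gamma (real n / real n)"
    using n by (simp add: Q_def prod.atLeastLessThan_Suc)
  also have "\<dots> = Q" using n by simp
  finally have gq: "(\<Prod>k<n. Gamma ((1 + real k)/real n)) = Q" .
  have Ga: "Gamma \<alpha> \<noteq> 0" using a by (metis Gamma_real_pos less_irrefl)
  have "exp (\<alpha> * ln (real n)) * P / Gamma \<alpha> = real n * Q"
    using gauss_const[OF n a] gq by (simp add: P_def)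
  hence key: "real n powr (\<alpha> - 1) * P = Q * Gamma \<alpha>"
    using n Ga by (simp add: powr_def powr_diff field_simps exp_diff)
  show "real n powr (\<alpha> - 1) * conv_list (map (\<lambda>k. fpow ((\<alpha> + real k) / real n)) [0..<n]) t
    = conv_list (map (\<lambda>k. fpow (real k / real n)) [1..<n] @ [fpow \<alpha>]) t"
    unfolding L R conv_list_fpow[OF asne aspos] conv_list_fpow[OF bsne bspos] sa sb pa pb
    using key by simp
qed

end
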